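(* Let $\mathcal U,\mathcal V,\mathcal X$ be real finite-dimensional Euclidean spaces, $\mathcal F:\mathcal X\to\mathcal U$ and $\mathcal G:\mathcal X\to\mathcal V$ linear maps, $\sigma>0$, $\Sigma_f$ a self-adjoint positive semidefinite linear operator on $\mathcal U$, and $\Sigma_g$ a self-adjoint positive semidefinite linear operator on $\mathcal V$. Let $\mathcal E_g$ be a self-adjoint positive definite linear operator on $\mathcal V$ with $\mathcal E_g\succeq \sigma^{-1}\Sigma_g+\mathcal G\mathcal G^*$, and set $\mathcal T_g:=\mathcal E_g-\sigma^{-1}\Sigma_g-\mathcal G\mathcal G^*\succeq 0$. Let $\mathcal T_f$ be a self-adjoint positive semidefinite linear operator on $\mathcal U$ and set $\widehat{\mathcal T}_f:=\mathcal T_f+\mathcal F\mathcal G^*\mathcal E_g^{-1}\mathcal G\mathcal F^*$. Let $\mathcal H:\mathcal X\to\mathcal U\times\mathcal V$, $\mathcal Hx=(\mathcal Fx,\mathcal Gx)$. Then $$\mathcal W:=\mathcal H\mathcal H^*+\sigma^{-1}\begin{pmatrix}\Sigma_f&0\\0&\Sigma_g\end{pmatrix}+\begin{pmatrix}\widehat{\mathcal T}_f&0\\0&\mathcal T_g\end{pmatrix}\succ 0 \iff \mathcal F\mathcal F^*+\sigma^{-1}\Sigma_f+\mathcal T_f\succ 0 .$$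
   Context: $\succ 0$ ($\succeq 0$) means positive definite (semidefinite) for self-adjoint operators; $\mathcal A\succeq\mathcal B$ means $\mathcal A-\mathcal B\succeq 0$. In the paper, $\Sigma_f$ is the operator with $\langle \xi-\tilde\xi,u-\tilde u\rangle\ge\|u-\tilde u\|^2_{\Sigma_f}$ for all $u,\tilde u\in\mathrm{dom} f$, $\xi\in\partial f(u)$, $\tilde\xi\in\partial f(\tilde u)$ for a closed proper convex $f$, and $\Sigma_g$ is the Hessian of a convex quadratic $g(v)=\frac12\langle v,\Sigma_g v\rangle-\langle b,v\rangle$. *)

theory Defs
  imports "HOL-Analysis.Analysis"
begin

definition self_adjoint_op :: "('a::euclidean_space \<Rightarrow> 'a) \<Rightarrow> bool" where
  "self_adjoint_op A \<longleftrightarrow> linear A \<and> (\<forall>x y. inner (A x) y = inner x (A y))"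

definition psd_op :: "('a::euclidean_space \<Rightarrow> 'a) \<Rightarrow> bool" where
  "psd_op A \<longleftrightarrow> self_adjoint_op A \<and> (\<forall>x. 0 \<le> inner x (A x))"

definition pd_op :: "('a::euclidean_space \<Rightarrow> 'a) \<Rightarrow> bool" where
  "pd_op A \<longleftrightarrow> self_adjoint_op A \<and> (\<forall>x. x \<noteq> 0 \<longrightarrow> 0 < inner x (A x))"

end

theory Submission imports Defs begin
lemma sa_add: "self_adjoint_op A \<Longrightarrow> self_adjoint_op B \<Longrightarrow> self_adjoint_op (\<lambda>x. A x + B x)"
  unfolding self_adjoint_op_def by (simp add: linear_compose_add inner_add_left inner_add_right)

lemma sa_diff: "self_adjoint_op A \<Longrightarrow> self_adjoint_op B \<Longrightarrow> self_adjoint_op (\<lambda>x. A x - B x)"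
  unfolding self_adjoint_op_def by (simp add: linear_compose_sub inner_diff_left inner_diff_right)

lemma sa_scale: "self_adjoint_op A \<Longrightarrow> self_adjoint_op (\<lambda>x. c *\<^sub>R A x)"
  unfolding self_adjoint_op_def by (simp add: linear_compose_scale_right)

lemma sa_id: "self_adjoint_op (\<lambda>x::'a::euclidean_space. x)"
  unfolding self_adjoint_op_def using linear_id[unfolded id_def] by simp

lemma sa_conj:
  fixes A :: "'a::euclidean_space \<Rightarrow> 'b::euclidean_space"
  assumes lA: "linear A" and lA': "linear A'" and adj: "\<And>x y. inner (A x) y = inner x (A' y)"
    and B: "self_adjoint_op B"
  shows "self_adjoint_op (\<lambda>x. A (B (A' x)))"
proof -
  have lB: "linear B" and sB: "\<And>x y. inner (B x) y = inner x (B y)" using B unfolding self_adjoint_op_def by auto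
  have "linear (A \<circ> (B \<circ> A'))" by (intro linear_compose lA lB lA')
  then have l: "linear (\<lambda>x. A (B (A' x)))" by (simp add: o_def)
  have "inner (A (B (A' x))) y = inner x (A (B (A' y)))" for x y
  proof -
    have "inner (A (B (A' x))) y = inner (B (A' x)) (A' y)" by (rule adj)
    also have "\<dots> = inner (A' x) (B (A' y))" by (rule sB)
    also have "\<dots> = inner (A (B (A' y))) x" by (metis adj inner_commute)
    finally show ?thesis by (simp add: inner_commute)
  qed
  with l show ?thesis unfolding self_adjoint_op_def by blast
qed

lemma sa_prod:
  fixes A :: "'a::euclidean_space \<Rightarrow> 'a" and B :: "'b::euclidean_space \<Rightarrow> 'b"
  assumes "self_adjoint_op A" "self_adjoint_op B"
  shows "self_adjoint_op (\<lambda>w. (A (fst w), B (snd w)))"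
  using assms unfolding self_adjoint_op_def linear_iff
  by (simp add: linear_add linear_cmul)
lemma inv_pd:
  fixes E :: "'a::euclidean_space \<Rightarrow> 'a"
  assumes "pd_op E"
  shows "linear (inv E)" "\<And>x. E (inv E x) = x" "\<And>x. inv E (E x) = x" "self_adjoint_op (inv E)"
proof -
  have lE: "linear E" and sa: "\<And>x y. inner (E x) y = inner x (E y)"
    and pos: "\<And>x. x \<noteq> 0 \<Longrightarrow> 0 < inner x (E x)"
    using assms unfolding pd_op_def self_adjoint_op_def by auto
  have "inj E"
  proof (rule linear_injective_0[OF lE, THEN iffD2], intro allI impI)
    fix x assume "E x = 0" then show "x = 0" using pos[of x] by (auto)
  qed
  then obtain f where f: "linear f" "\<And>x. f (E x) = x" "\<And>x. E (f x) = x"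
    using linear_injective_isomorphism[OF lE] by blast
  have iE: "inv E = f"
    by (rule ext, metis f(3) \<open>inj E\<close> inv_f_f)
  show "linear (inv E)" "\<And>x. E (inv E x) = x" "\<And>x. inv E (E x) = x" using f iE by auto
  show "self_adjoint_op (inv E)" unfolding self_adjoint_op_def iE
    using f sa by metis
qed

theorem proposition2p1:
  fixes F :: "'x::euclidean_space \<Rightarrow> 'u::euclidean_space"
    and G :: "'x \<Rightarrow> 'v::euclidean_space"
    and \<sigma> :: real
    and Sf Tf :: "'u \<Rightarrow> 'u"
    and Sg Eg :: "'v \<Rightarrow> 'v"
  assumes F: "linear F" and G: "linear G"
    and sigma: "\<sigma> > 0"
    and Sf: "psd_op Sf" and Sg: "psd_op Sg"
    and Eg: "pd_op Eg"
    and Eg_ge: "psd_op (\<lambda>v. Eg v - (inverse \<sigma> *\<^sub>R Sg v + G (adjoint G v)))"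
    and Tf: "psd_op Tf"
  defines "Tg \<equiv> (\<lambda>v. Eg v - inverse \<sigma> *\<^sub>R Sg v - G (adjoint G v))"
    and "Tfh \<equiv> (\<lambda>u. Tf u + F (adjoint G (inv Eg (G (adjoint F u)))))"
    and "H \<equiv> (\<lambda>x. (F x, G x))"
  defines "W \<equiv> (\<lambda>w::'u \<times> 'v. H (adjoint H w)
                 + inverse \<sigma> *\<^sub>R (Sf (fst w), Sg (snd w))
                 + (Tfh (fst w), Tg (snd w)))"
  shows "pd_op W \<longleftrightarrow> pd_op (\<lambda>u. F (adjoint F u) + inverse \<sigma> *\<^sub>R Sf u + Tf u)"
proof -
  define R where "R = (\<lambda>u. F (adjoint F u) + inverse \<sigma> *\<^sub>R Sf u + Tf u)"
  define Ei where "Ei = inv Eg"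
  have lEi: "linear Ei" and EEi: "\<And>x. Eg (Ei x) = x" and saEi: "self_adjoint_op Ei"
    using inv_pd[OF Eg] unfolding Ei_def by auto
  have saEg: "self_adjoint_op Eg" and lEg: "linear Eg"
    and posEg: "\<And>x. x \<noteq> 0 \<Longrightarrow> 0 < inner x (Eg x)"
    using Eg unfolding pd_op_def self_adjoint_op_def by auto
  have saSf: "self_adjoint_op Sf" and saTf: "self_adjoint_op Tf" and saSg: "self_adjoint_op Sg"
    using Sf Tf Sg unfolding psd_op_def by auto
  have lFa: "linear (adjoint F)" and lGa: "linear (adjoint G)"
    using F G adjoint_linear by auto
  have aF: "\<And>x y. inner (adjoint F y) x = inner y (F x)"
    and aG: "\<And>x y. inner (adjoint G y) x = inner y (G x)"
    using adjoint_clauses(2) F G by auto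
  have aF': "\<And>x y. inner (F x) y = inner x (adjoint F y)"
    and aG': "\<And>x y. inner (G x) y = inner x (adjoint G y)"
    using adjoint_clauses(1) F G by metis+
  have lH: "linear H" unfolding H_def linear_iff using F G by (simp add: linear_add linear_cmul)
  have adjH: "adjoint H = (\<lambda>w. adjoint F (fst w) + adjoint G (snd w))"
    by (rule adjoint_unique) (auto simp: H_def inner_add_right aF[symmetric] aG[symmetric] inner_commute)
  define D1 where "D1 = (\<lambda>u. inverse \<sigma> *\<^sub>R Sf u + Tf u + F (adjoint G (Ei (G (adjoint F u)))))"
  define D2 where "D2 = (\<lambda>v. inverse \<sigma> *\<^sub>R Sg v + Tg v)"
  have Weq: "W = (\<lambda>w. H (adjoint H w) + (D1 (fst w), D2 (snd w)))"
    by (auto simp: W_def D1_def D2_def Tfh_def Ei_def algebra_simps)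
  have saD1: "self_adjoint_op D1" unfolding D1_def
    by (intro sa_add sa_scale saSf saTf sa_conj[OF F lFa aF'] sa_conj[OF lGa G aG] sa_conj[OF G lGa aG'] saEi)
  have "self_adjoint_op Tg" unfolding Tg_def
    by (intro sa_diff sa_scale saSg saEg sa_conj[OF G lGa aG' sa_id])
  then have saD2: "self_adjoint_op D2" unfolding D2_def
    by (intro sa_add sa_scale saSg)
  have "self_adjoint_op W" unfolding Weq
    by (intro sa_add sa_prod saD1 saD2 sa_conj[OF lH adjoint_linear[OF lH] _ sa_id])
       (simp add: adjoint_clauses(1)[OF lH])
  moreover have "self_adjoint_op R" unfolding R_def
    by (intro sa_add sa_scale saSf saTf sa_conj[OF F lFa aF' sa_id])
  moreover have key: "inner (u,v) (W (u,v)) = inner u (R u) + inner (v + Ei (G (adjoint F u))) (Eg (v + Ei (G (adjoint F u))))" for u v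
  proof -
    define p where "p = adjoint F u"
    define q where "q = adjoint G v"
    define z where "z = Ei (G p)"
    have Ez: "Eg z = G p" unfolding z_def by (rule EEi)
    have saEg': "\<And>x y. inner (Eg x) y = inner x (Eg y)" using saEg unfolding self_adjoint_op_def by auto
    have lEg': "linear Eg" using saEg unfolding self_adjoint_op_def by auto
    have h1: "inner (u,v) (H (adjoint H (u,v))) = inner (p+q) (p+q)"
      using adjoint_clauses(2)[OF lH, of "(u,v)" "adjoint H (u,v)"] by (simp add: adjH p_def q_def)
    have h2: "inner u (F x) = inner p x" for x using aF p_def by simp
    have h3: "inner v (G x) = inner q x" for x using aG q_def by simp
    have h4: "inner p (adjoint G x) = inner (G p) x" for x using aG' by simp
    have d1: "inner u (D1 u) = inverse \<sigma> * inner u (Sf u) + inner u (Tf u) + inner (G p) z"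
      unfolding D1_def z_def p_def[symmetric] by (simp add: inner_add_right h2 h4)
    have d2: "inner v (D2 v) = inner v (Eg v) - inner q q"
      unfolding D2_def Tg_def by (simp add: inner_add_right inner_diff_right h3 q_def)
    have r: "inner u (R u) = inner p p + inverse \<sigma> * inner u (Sf u) + inner u (Tf u)"
      unfolding R_def by (simp add: inner_add_right h2 p_def)
    have e: "inner (v + z) (Eg (v + z)) = inner v (Eg v) + 2 * inner q p + inner (G p) z"
    proof -
      have "inner (v + z) (Eg (v + z)) = inner v (Eg v) + inner v (Eg z) + inner z (Eg v) + inner z (Eg z)"
        by (simp add: linear_add[OF lEg'] inner_add_left inner_add_right)
      also have "inner z (Eg v) = inner v (Eg z)" by (metis saEg' inner_commute)
      finally show ?thesis using Ez h3 by (simp add: inner_commute)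
    qed
    have "inner (u,v) (W (u,v)) = inner (u,v) (H (adjoint H (u,v))) + inner u (D1 u) + inner v (D2 v)"
      unfolding Weq by (simp add: inner_add_right)
    also have "\<dots> = inner u (R u) + inner (v + z) (Eg (v + z))"
      unfolding h1 d1 d2 r e by (simp add: inner_add_left inner_add_right inner_commute[of p q] algebra_simps)
    finally show ?thesis unfolding z_def p_def .
  qed
  moreover have "(\<forall>w. w \<noteq> 0 \<longrightarrow> 0 < inner w (W w)) \<longleftrightarrow> (\<forall>u. u \<noteq> 0 \<longrightarrow> 0 < inner u (R u))"
  proof
    assume A: "\<forall>w. w \<noteq> 0 \<longrightarrow> 0 < inner w (W w)"
    show "\<forall>u. u \<noteq> 0 \<longrightarrow> 0 < inner u (R u)"
    proof (intro allI impI)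
      fix u :: 'u assume "u \<noteq> 0"
      then have "(u, - Ei (G (adjoint F u))) \<noteq> 0" by (simp add: zero_prod_def)
      with A have "0 < inner (u, - Ei (G (adjoint F u))) (W (u, - Ei (G (adjoint F u))))" by blast
      then show "0 < inner u (R u)" unfolding key by simp
    qed
  next
    assume B: "\<forall>u. u \<noteq> 0 \<longrightarrow> 0 < inner u (R u)"
    have nn: "0 \<le> inner x (Eg x)" for x using posEg[of x] by (cases "x = 0") auto
    show "\<forall>w. w \<noteq> 0 \<longrightarrow> 0 < inner w (W w)"
    proof (intro allI impI)
      fix w :: "'u \<times> 'v" assume w: "w \<noteq> 0"
      obtain u v where uv: "w = (u,v)" by fastforce
      show "0 < inner w (W w)"
      proof (cases "u = 0")
        case True
        then have "v \<noteq> 0" using w uv by (simp add: zero_prod_def)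
        have "adjoint F u = 0" using True linear_0[OF lFa] by simp
        then have "Ei (G (adjoint F u)) = 0" using linear_0[OF G] linear_0[OF lEi] by simp
        then show ?thesis using posEg[OF \<open>v \<noteq> 0\<close>] True unfolding uv key by simp
      next
        case False
        then show ?thesis using B nn unfolding uv key by (simp add: add_pos_nonneg)
      qed
    qed
  qed
  ultimately show ?thesis unfolding pd_op_def R_def[symmetric] by blast
qed
end
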